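(* Let $A\in\mathrm{SL}(2,\mathbb Z)$ and let $W_0=V_0,V_1,\dots,V_m=AW_0$, $m=c(A)$, be the shortest path from $W_0$ to $AW_0$ in $\Gamma$. If $c(A)\le1$, then $A$ is a minimal matrix. If $c(A)>1$, then $A$ is a minimal matrix if and only if $V_{m-1}\ne AV_1$.
   Context: Admissible hexagons are the sets $\{\pm a,\pm b,\pm(a+b)\}\subset\mathbb Z^2$ with $(a,b)$ a basis of $\mathbb Z^2$ (corresponding to isotopy classes of $\theta$-curves in $T^2$). $\Gamma$ is the graph on admissible hexagons, two adjacent iff they share two opposite pairs of vertices $\pm\sigma,\pm\mu$ (a flip); it is a trivalent tree with graph distance $d$, acted on by $\mathrm{SL}(2,\mathbb Z)$. $W_0=\{\pm(1,0),\pm(0,1),\pm(1,-1)\}$ and $c(A)=d(W_0,AW_0)$. For the operator $\mathcal A$ on $\mathbb Z^2$ given by $A$, $c(\mathcal A)=\min_{B\in\mathrm{SL}(2,\mathbb Z)}c(B^{-1}AB)$; a matrix $A$ is minimal if $c(A)=c(\mathcal A)$, i.e. $c(A)\le c(B^{-1}AB)$ for all $B\in\mathrm{SL}(2,\mathbb Z)$. *)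

theory Defs
  imports Main
begin

text \<open>Vectors of Z^2 as pairs of integers; 2x2 integer matrices as tuples
  (a, b, c, d) standing for the matrix with rows (a, b) and (c, d).\<close>

type_synonym vec = "int \<times> int"
type_synonym mat2 = "int \<times> int \<times> int \<times> int"

fun vadd :: "vec \<Rightarrow> vec \<Rightarrow> vec" where
  "vadd (x1, y1) (x2, y2) = (x1 + x2, y1 + y2)"

fun vneg :: "vec \<Rightarrow> vec" where
  "vneg (x, y) = (- x, - y)"

fun vdet :: "vec \<Rightarrow> vec \<Rightarrow> int" where
  "vdet (x1, y1) (x2, y2) = x1 * y2 - y1 * x2"

definition is_basis :: "vec \<Rightarrow> vec \<Rightarrow> bool" where
  "is_basis a b \<longleftrightarrow> \<bar>vdet a b\<bar> = 1"

definition hexagon :: "vec \<Rightarrow> vec \<Rightarrow> vec set" where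
  "hexagon a b = {a, vneg a, b, vneg b, vadd a b, vneg (vadd a b)}"

definition admissible :: "vec set \<Rightarrow> bool" where
  "admissible H \<longleftrightarrow> (\<exists>a b. is_basis a b \<and> H = hexagon a b)"

definition adj :: "vec set \<Rightarrow> vec set \<Rightarrow> bool" where
  "adj H K \<longleftrightarrow> admissible H \<and> admissible K \<and> H \<noteq> K \<and>
     (\<exists>\<sigma> \<mu>. {\<sigma>, vneg \<sigma>, \<mu>, vneg \<mu>} \<subseteq> H \<inter> K \<and> \<mu> \<noteq> \<sigma> \<and> \<mu> \<noteq> vneg \<sigma>)"

definition is_walk :: "vec set list \<Rightarrow> bool" where
  "is_walk Vs \<longleftrightarrow> Vs \<noteq> [] \<and> (\<forall>V\<in>set Vs. admissible V) \<and>
     (\<forall>i. Suc i < length Vs \<longrightarrow> adj (Vs ! i) (Vs ! Suc i))"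

definition dist_G :: "vec set \<Rightarrow> vec set \<Rightarrow> nat" where
  "dist_G H K = (LEAST n. \<exists>Vs. is_walk Vs \<and> length Vs = Suc n \<and> hd Vs = H \<and> last Vs = K)"

fun mat_apply :: "mat2 \<Rightarrow> vec \<Rightarrow> vec" where
  "mat_apply (a, b, c, d) (x, y) = (a * x + b * y, c * x + d * y)"

fun mat_mult :: "mat2 \<Rightarrow> mat2 \<Rightarrow> mat2" where
  "mat_mult (a, b, c, d) (a', b', c', d') =
     (a * a' + b * c', a * b' + b * d', c * a' + d * c', c * b' + d * d')"

fun mat_det :: "mat2 \<Rightarrow> int" where
  "mat_det (a, b, c, d) = a * d - b * c"

definition SL2 :: "mat2 set" where
  "SL2 = {M. mat_det M = 1}"

fun sl2_inv :: "mat2 \<Rightarrow> mat2" where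
  "sl2_inv (a, b, c, d) = (d, - b, - c, a)"

definition act :: "mat2 \<Rightarrow> vec set \<Rightarrow> vec set" where
  "act A H = mat_apply A ` H"

definition W0 :: "vec set" where
  "W0 = {(1, 0), (-1, 0), (0, 1), (0, -1), (1, -1), (-1, 1)}"

definition cplx :: "mat2 \<Rightarrow> nat" where
  "cplx A = dist_G W0 (act A W0)"

definition minimal :: "mat2 \<Rightarrow> bool" where
  "minimal A \<longleftrightarrow> (\<forall>B\<in>SL2. cplx A \<le> cplx (mat_mult (mat_mult (sl2_inv B) A) B))"

end

theory Submission
  imports Defs
begin

fun Qf :: "vec \<Rightarrow> int" where
  "Qf (x, y) = x*x + x*y + y*y"

fun bet :: "vec \<Rightarrow> vec \<Rightarrow> int" where
  "bet (x1, y1) (x2, y2) = 2*x1*x2 + x1*y2 + y1*x2 + 2*y1*y2"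

definition hgt :: "vec set \<Rightarrow> int" where
  "hgt H = (\<Sum>v\<in>H. Qf v)"

lemma lin_indep:
  fixes a1 a2 b1 b2 i j :: int
  assumes "\<bar>a1*b2 - a2*b1\<bar> = 1" "i*a1 + j*b1 = 0" "i*a2 + j*b2 = 0"
  shows "i = 0 \<and> j = 0"
proof -
  have "i * (a1*b2 - a2*b1) = (i*a1 + j*b1)*b2 - (i*a2 + j*b2)*b1" by (simp add: algebra_simps)
  hence 1: "i * (a1*b2 - a2*b1) = 0" using assms(2,3) by simp
  have "j * (a1*b2 - a2*b1) = (i*a2 + j*b2)*a1 - (i*a1 + j*b1)*a2" by (simp add: algebra_simps)
  hence 2: "j * (a1*b2 - a2*b1) = 0" using assms(2,3) by simp
  show ?thesis using 1 2 assms(1) by auto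
qed

lemmas li = lin_indep
lemma hd0: "is_basis a b \<Longrightarrow> a \<noteq> vneg a"
proof
  obtain a1 a2 b1 b2 where ab: "a = (a1,a2)" "b = (b1,b2)" by (cases a, cases b)
  assume B: "is_basis a b" and E: "a = vneg a"
  have d: "\<bar>a1*b2 - a2*b1\<bar> = 1" using B ab by (simp add: is_basis_def)
  have "(2)*a1 + (0)*b1 = 0 \<and> (2)*a2 + (0)*b2 = 0" using E ab by (simp; linarith)
  then show False using li[OF d, of "2" "0"] by simp
qed
lemma hd1: "is_basis a b \<Longrightarrow> a \<noteq> b"
proof
  obtain a1 a2 b1 b2 where ab: "a = (a1,a2)" "b = (b1,b2)" by (cases a, cases b)
  assume B: "is_basis a b" and E: "a = b"
  have d: "\<bar>a1*b2 - a2*b1\<bar> = 1" using B ab by (simp add: is_basis_def)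
  have "(1)*a1 + (-1)*b1 = 0 \<and> (1)*a2 + (-1)*b2 = 0" using E ab by (simp; linarith)
  then show False using li[OF d, of "1" "-1"] by simp
qed
lemma hd2: "is_basis a b \<Longrightarrow> a \<noteq> vneg b"
proof
  obtain a1 a2 b1 b2 where ab: "a = (a1,a2)" "b = (b1,b2)" by (cases a, cases b)
  assume B: "is_basis a b" and E: "a = vneg b"
  have d: "\<bar>a1*b2 - a2*b1\<bar> = 1" using B ab by (simp add: is_basis_def)
  have "(1)*a1 + (1)*b1 = 0 \<and> (1)*a2 + (1)*b2 = 0" using E ab by (simp; linarith)
  then show False using li[OF d, of "1" "1"] by simp
qed
lemma hd3: "is_basis a b \<Longrightarrow> a \<noteq> vadd a b"
proof
  obtain a1 a2 b1 b2 where ab: "a = (a1,a2)" "b = (b1,b2)" by (cases a, cases b)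
  assume B: "is_basis a b" and E: "a = vadd a b"
  have d: "\<bar>a1*b2 - a2*b1\<bar> = 1" using B ab by (simp add: is_basis_def)
  have "(0)*a1 + (1)*b1 = 0 \<and> (0)*a2 + (1)*b2 = 0" using E ab by (simp; linarith)
  then show False using li[OF d, of "0" "1"] by simp
qed
lemma hd4: "is_basis a b \<Longrightarrow> a \<noteq> vneg (vadd a b)"
proof
  obtain a1 a2 b1 b2 where ab: "a = (a1,a2)" "b = (b1,b2)" by (cases a, cases b)
  assume B: "is_basis a b" and E: "a = vneg (vadd a b)"
  have d: "\<bar>a1*b2 - a2*b1\<bar> = 1" using B ab by (simp add: is_basis_def)
  have "(2)*a1 + (1)*b1 = 0 \<and> (2)*a2 + (1)*b2 = 0" using E ab by (simp; linarith)
  then show False using li[OF d, of "2" "1"] by simp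
qed
lemma hd5: "is_basis a b \<Longrightarrow> vneg a \<noteq> b"
proof
  obtain a1 a2 b1 b2 where ab: "a = (a1,a2)" "b = (b1,b2)" by (cases a, cases b)
  assume B: "is_basis a b" and E: "vneg a = b"
  have d: "\<bar>a1*b2 - a2*b1\<bar> = 1" using B ab by (simp add: is_basis_def)
  have "(1)*a1 + (1)*b1 = 0 \<and> (1)*a2 + (1)*b2 = 0" using E ab by (simp; linarith)
  then show False using li[OF d, of "1" "1"] by simp
qed
lemma hd6: "is_basis a b \<Longrightarrow> vneg a \<noteq> vneg b"
proof
  obtain a1 a2 b1 b2 where ab: "a = (a1,a2)" "b = (b1,b2)" by (cases a, cases b)
  assume B: "is_basis a b" and E: "vneg a = vneg b"
  have d: "\<bar>a1*b2 - a2*b1\<bar> = 1" using B ab by (simp add: is_basis_def)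
  have "(1)*a1 + (-1)*b1 = 0 \<and> (1)*a2 + (-1)*b2 = 0" using E ab by (simp; linarith)
  then show False using li[OF d, of "1" "-1"] by simp
qed
lemma hd7: "is_basis a b \<Longrightarrow> vneg a \<noteq> vadd a b"
proof
  obtain a1 a2 b1 b2 where ab: "a = (a1,a2)" "b = (b1,b2)" by (cases a, cases b)
  assume B: "is_basis a b" and E: "vneg a = vadd a b"
  have d: "\<bar>a1*b2 - a2*b1\<bar> = 1" using B ab by (simp add: is_basis_def)
  have "(2)*a1 + (1)*b1 = 0 \<and> (2)*a2 + (1)*b2 = 0" using E ab by (simp; linarith)
  then show False using li[OF d, of "2" "1"] by simp
qed
lemma hd8: "is_basis a b \<Longrightarrow> vneg a \<noteq> vneg (vadd a b)"
proof
  obtain a1 a2 b1 b2 where ab: "a = (a1,a2)" "b = (b1,b2)" by (cases a, cases b)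
  assume B: "is_basis a b" and E: "vneg a = vneg (vadd a b)"
  have d: "\<bar>a1*b2 - a2*b1\<bar> = 1" using B ab by (simp add: is_basis_def)
  have "(0)*a1 + (1)*b1 = 0 \<and> (0)*a2 + (1)*b2 = 0" using E ab by (simp; linarith)
  then show False using li[OF d, of "0" "1"] by simp
qed
lemma hd9: "is_basis a b \<Longrightarrow> b \<noteq> vneg b"
proof
  obtain a1 a2 b1 b2 where ab: "a = (a1,a2)" "b = (b1,b2)" by (cases a, cases b)
  assume B: "is_basis a b" and E: "b = vneg b"
  have d: "\<bar>a1*b2 - a2*b1\<bar> = 1" using B ab by (simp add: is_basis_def)
  have "(0)*a1 + (2)*b1 = 0 \<and> (0)*a2 + (2)*b2 = 0" using E ab by (simp; linarith)
  then show False using li[OF d, of "0" "2"] by simp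
qed
lemma hd10: "is_basis a b \<Longrightarrow> b \<noteq> vadd a b"
proof
  obtain a1 a2 b1 b2 where ab: "a = (a1,a2)" "b = (b1,b2)" by (cases a, cases b)
  assume B: "is_basis a b" and E: "b = vadd a b"
  have d: "\<bar>a1*b2 - a2*b1\<bar> = 1" using B ab by (simp add: is_basis_def)
  have "(1)*a1 + (0)*b1 = 0 \<and> (1)*a2 + (0)*b2 = 0" using E ab by (simp; linarith)
  then show False using li[OF d, of "1" "0"] by simp
qed
lemma hd11: "is_basis a b \<Longrightarrow> b \<noteq> vneg (vadd a b)"
proof
  obtain a1 a2 b1 b2 where ab: "a = (a1,a2)" "b = (b1,b2)" by (cases a, cases b)
  assume B: "is_basis a b" and E: "b = vneg (vadd a b)"
  have d: "\<bar>a1*b2 - a2*b1\<bar> = 1" using B ab by (simp add: is_basis_def)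
  have "(1)*a1 + (2)*b1 = 0 \<and> (1)*a2 + (2)*b2 = 0" using E ab by (simp; linarith)
  then show False using li[OF d, of "1" "2"] by simp
qed
lemma hd12: "is_basis a b \<Longrightarrow> vneg b \<noteq> vadd a b"
proof
  obtain a1 a2 b1 b2 where ab: "a = (a1,a2)" "b = (b1,b2)" by (cases a, cases b)
  assume B: "is_basis a b" and E: "vneg b = vadd a b"
  have d: "\<bar>a1*b2 - a2*b1\<bar> = 1" using B ab by (simp add: is_basis_def)
  have "(1)*a1 + (2)*b1 = 0 \<and> (1)*a2 + (2)*b2 = 0" using E ab by (simp; linarith)
  then show False using li[OF d, of "1" "2"] by simp
qed
lemma hd13: "is_basis a b \<Longrightarrow> vneg b \<noteq> vneg (vadd a b)"
proof
  obtain a1 a2 b1 b2 where ab: "a = (a1,a2)" "b = (b1,b2)" by (cases a, cases b)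
  assume B: "is_basis a b" and E: "vneg b = vneg (vadd a b)"
  have d: "\<bar>a1*b2 - a2*b1\<bar> = 1" using B ab by (simp add: is_basis_def)
  have "(1)*a1 + (0)*b1 = 0 \<and> (1)*a2 + (0)*b2 = 0" using E ab by (simp; linarith)
  then show False using li[OF d, of "1" "0"] by simp
qed
lemma hd14: "is_basis a b \<Longrightarrow> vadd a b \<noteq> vneg (vadd a b)"
proof
  obtain a1 a2 b1 b2 where ab: "a = (a1,a2)" "b = (b1,b2)" by (cases a, cases b)
  assume B: "is_basis a b" and E: "vadd a b = vneg (vadd a b)"
  have d: "\<bar>a1*b2 - a2*b1\<bar> = 1" using B ab by (simp add: is_basis_def)
  have "(2)*a1 + (2)*b1 = 0 \<and> (2)*a2 + (2)*b2 = 0" using E ab by (simp; linarith)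
  then show False using li[OF d, of "2" "2"] by simp
qed
lemmas hex_distinct = hd0 hd1 hd2 hd3 hd4 hd5 hd6 hd7 hd8 hd9 hd10 hd11 hd12 hd13 hd14

lemma vneg_vneg[simp]: "vneg (vneg v) = v" by (cases v) simp

fun lc :: "vec \<Rightarrow> vec \<Rightarrow> vec \<Rightarrow> vec" where
  "lc (a1, a2) (b1, b2) (i, j) = (i*a1 + j*b1, i*a2 + j*b2)"

lemma lc_neg: "vneg (lc a b u) = lc a b (vneg u)"
  by (cases a; cases b; cases u) simp
lemma lc_add: "vadd (lc a b u) (lc a b v) = lc a b (vadd u v)"
  by (cases a; cases b; cases u; cases v) (simp add: algebra_simps)
lemma lc_10: "lc a b (1,0) = a" by (cases a; cases b) simp
lemma lc_01: "lc a b (0,1) = b" by (cases a; cases b) simp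
lemma lc_det: "vdet (lc a b u) (lc a b v) = vdet u v * vdet a b"
  by (cases a; cases b; cases u; cases v) (simp add: algebra_simps)

lemma hex_lc: "hexagon (lc a b u) (lc a b v) = lc a b ` hexagon u v"
  by (simp add: hexagon_def lc_neg lc_add)

definition H0 :: "vec set" where "H0 = hexagon (1,0) (0,1)"

lemma H0_eq: "H0 = {(1,0), (-1,0), (0,1), (0,-1), (1,1), (-1,-1)}"
  by (simp add: H0_def hexagon_def)

lemma hex_H0: "hexagon a b = lc a b ` H0"
  using hex_lc[of a b "(1,0)" "(0,1)"] by (simp add: lc_10 lc_01 H0_def)

lemma basis_lc: "is_basis a b \<Longrightarrow> is_basis (lc a b u) (lc a b v) = (\<bar>vdet u v\<bar> = 1)"
  by (simp add: is_basis_def lc_det abs_mult)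

lemma L1c:
  assumes "u \<in> H0" "v \<in> H0" "v \<noteq> u" "v \<noteq> vneg u"
  shows "\<bar>vdet u v\<bar> = 1 \<and> (hexagon u v = H0 \<or> hexagon u (vneg v) = H0)"
  using assms unfolding H0_eq
  by (elim insertE emptyE; simp add: hexagon_def set_eq_subset)

lemma NBRc:
  assumes "u \<in> H0" "v \<in> H0" "v \<noteq> u" "v \<noteq> vneg u"
  shows "hexagon u v \<in> {H0, hexagon (1,0) (0,-1), hexagon (1,0) (1,1), hexagon (0,1) (1,1)}
    \<and> hexagon u (vneg v) \<in> {H0, hexagon (1,0) (0,-1), hexagon (1,0) (1,1), hexagon (0,1) (1,1)}"
  using assms unfolding H0_eq
  by (elim insertE emptyE; simp add: hexagon_def set_eq_subset)

lemma Qf_neg[simp]: "Qf (vneg v) = Qf v" by (cases v) (simp add: algebra_simps)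

lemma hgt_hex:
  assumes "is_basis a b"
  shows "hgt (hexagon a b) = 2 * (Qf a + Qf b + Qf (vadd a b))"
  using hex_distinct[OF assms] by (simp add: hgt_def hexagon_def)

lemma mem_hex: "x \<in> hexagon a b \<Longrightarrow> \<exists>u\<in>H0. x = lc a b u"
  by (auto simp: hex_H0)

lemma L1:
  assumes "is_basis a b" "s \<in> hexagon a b" "m \<in> hexagon a b" "m \<noteq> s" "m \<noteq> vneg s"
  shows "is_basis s m \<and> (hexagon a b = hexagon s m \<or> hexagon a b = hexagon s (vneg m))"
proof -
  obtain u where u: "u \<in> H0" "s = lc a b u" using mem_hex[OF assms(2)] by blast
  obtain v where v: "v \<in> H0" "m = lc a b v" using mem_hex[OF assms(3)] by blast
  have "v \<noteq> u" "v \<noteq> vneg u" using assms(4,5) u v by (auto simp: lc_neg)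
  from L1c[OF u(1) v(1) this] have c: "\<bar>vdet u v\<bar> = 1" "hexagon u v = H0 \<or> hexagon u (vneg v) = H0"
    by auto
  have "is_basis s m" using basis_lc[OF assms(1)] c(1) u v by simp
  moreover have "hexagon a b = hexagon s m \<or> hexagon a b = hexagon s (vneg m)"
  proof -
    have "hexagon s m = lc a b ` hexagon u v" "hexagon s (vneg m) = lc a b ` hexagon u (vneg v)"
      by (simp_all add: u v hex_lc lc_neg)
    then show ?thesis using c(2) hex_H0[of a b] by auto
  qed
  ultimately show ?thesis by blast
qed

lemma lc_0m: "lc a b (0,-1) = vneg b" by (cases a; cases b) simp
lemma lc_11: "lc a b (1,1) = vadd a b" by (cases a; cases b) simp

lemma NBR:
  assumes "is_basis a b" "s \<in> hexagon a b" "m \<in> hexagon a b" "m \<noteq> s" "m \<noteq> vneg s"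
  shows "hexagon s m \<in> {hexagon a b, hexagon a (vneg b), hexagon a (vadd a b), hexagon b (vadd a b)}
    \<and> hexagon s (vneg m) \<in> {hexagon a b, hexagon a (vneg b), hexagon a (vadd a b), hexagon b (vadd a b)}"
proof -
  obtain u where u: "u \<in> H0" "s = lc a b u" using mem_hex[OF assms(2)] by blast
  obtain v where v: "v \<in> H0" "m = lc a b v" using mem_hex[OF assms(3)] by blast
  have "v \<noteq> u" "v \<noteq> vneg u" using assms(4,5) u v by (auto simp: lc_neg)
  from NBRc[OF u(1) v(1) this] have c:
    "hexagon u v \<in> {H0, hexagon (1,0) (0,-1), hexagon (1,0) (1,1), hexagon (0,1) (1,1)}"
    "hexagon u (vneg v) \<in> {H0, hexagon (1,0) (0,-1), hexagon (1,0) (1,1), hexagon (0,1) (1,1)}"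
    by auto
  have e: "hexagon a (vneg b) = lc a b ` hexagon (1,0) (0,-1)"
          "hexagon a (vadd a b) = lc a b ` hexagon (1,0) (1,1)"
          "hexagon b (vadd a b) = lc a b ` hexagon (0,1) (1,1)"
    by (simp_all add: hex_lc[symmetric] lc_10 lc_01 lc_0m lc_11)
  have eqs: "hexagon s m = lc a b ` hexagon u v" "hexagon s (vneg m) = lc a b ` hexagon u (vneg v)"
    by (simp_all add: u v hex_lc lc_neg)
  have G: "\<And>x A B C D. x \<in> {A,B,C,D} \<Longrightarrow> lc a b ` x \<in> {lc a b ` A, lc a b ` B, lc a b ` C, lc a b ` D}"
    by auto
  show ?thesis unfolding e hex_H0[of a b] eqs using G[OF c(1)] G[OF c(2)] by (rule conjI)
qed

lemma ADJ:
  assumes "is_basis a b" "adj (hexagon a b) K"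
  shows "K \<in> {hexagon a (vneg b), hexagon a (vadd a b), hexagon b (vadd a b)}"
proof -
  from assms(2) obtain \<sigma> \<mu> where K: "admissible K" "hexagon a b \<noteq> K"
    and S: "{\<sigma>, vneg \<sigma>, \<mu>, vneg \<mu>} \<subseteq> hexagon a b \<inter> K" "\<mu> \<noteq> \<sigma>" "\<mu> \<noteq> vneg \<sigma>"
    unfolding adj_def by blast
  from K(1) obtain c d where cd: "is_basis c d" "K = hexagon c d" unfolding admissible_def by blast
  have "K = hexagon \<sigma> \<mu> \<or> K = hexagon \<sigma> (vneg \<mu>)" using L1[OF cd(1), of \<sigma> \<mu>] S cd(2) by auto
  moreover have "hexagon \<sigma> \<mu> \<in> {hexagon a b, hexagon a (vneg b), hexagon a (vadd a b), hexagon b (vadd a b)}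
    \<and> hexagon \<sigma> (vneg \<mu>) \<in> {hexagon a b, hexagon a (vneg b), hexagon a (vadd a b), hexagon b (vadd a b)}"
    using NBR[OF assms(1), of \<sigma> \<mu>] S by auto
  ultimately show ?thesis using K(2) by auto
qed

lemma basis_ba: "is_basis a b \<Longrightarrow> is_basis b (vadd a b)"
  by (cases a; cases b) (simp add: is_basis_def algebra_simps abs_minus_commute)
lemma basis_ab: "is_basis a b \<Longrightarrow> is_basis a (vadd a b)"
  by (cases a; cases b) (simp add: is_basis_def algebra_simps)
lemma basis_anb: "is_basis a b \<Longrightarrow> is_basis a (vneg b)"
  by (cases a; cases b) (simp add: is_basis_def algebra_simps abs_minus_commute)

lemma hgt_N:
  assumes "is_basis a b"
  shows "hgt (hexagon a (vneg b)) = hgt (hexagon a b) - 4 * bet a b"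
    "hgt (hexagon a (vadd a b)) = hgt (hexagon a b) + 4 * (2 * Qf a + bet a b)"
    "hgt (hexagon b (vadd a b)) = hgt (hexagon a b) + 4 * (2 * Qf b + bet a b)"
  using assms
  by (simp_all add: hgt_hex basis_ba basis_ab basis_anb; cases a; cases b; simp add: algebra_simps)+

lemma key_id: "4 * Qf a * Qf b - (bet a b)^2 = 3 * (vdet a b)^2"
  by (cases a; cases b) (simp add: algebra_simps power2_eq_square)

lemma Qf_add: "Qf (vadd a b) = Qf a + Qf b + bet a b"
  by (cases a; cases b) (simp add: algebra_simps)

lemma Qf_nonneg: "Qf v \<ge> 0"
proof (cases v)
  case (Pair x y)
  have "4 * Qf v = (2*x+y)^2 + 3*y^2" using Pair by (simp add: algebra_simps power2_eq_square)
  moreover have "(2*x+y)^2 \<ge> 0" "y^2 \<ge> 0" by simp_all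
  ultimately show ?thesis by linarith
qed

lemma bet_sq: "is_basis a b \<Longrightarrow> (bet a b)^2 = 4 * Qf a * Qf b - 3"
proof -
  assume "is_basis a b"
  then have "\<bar>vdet a b\<bar> = 1" by (simp add: is_basis_def)
  then have "(vdet a b)^2 = 1" by (metis abs_power2 power2_abs power_one)
  then show ?thesis using key_id[of a b] by simp
qed

lemma bet_odd: "is_basis a b \<Longrightarrow> odd (bet a b)"
proof
  assume "is_basis a b" "even (bet a b)"
  then obtain k where "bet a b = 2 * k" by blast
  then have "4 * k^2 = 4 * Qf a * Qf b - 3" using bet_sq[OF \<open>is_basis a b\<close>] by (simp add: power2_eq_square)
  then have "4 * (Qf a * Qf b - k^2) = 3" by (simp add: algebra_simps)
  moreover have "\<forall>m::int. 4 * m \<noteq> 3" by presburger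
  ultimately show False by blast
qed

lemma odd_ne0: "odd (x::int) \<Longrightarrow> x \<noteq> 0" by auto
lemma P1:
  assumes "adj H K" shows "hgt H \<noteq> hgt K"
proof -
  from assms obtain a b where ab: "is_basis a b" "H = hexagon a b"
    unfolding adj_def admissible_def by blast
  have o: "odd (bet a b)" "odd (2 * Qf a + bet a b)" "odd (2 * Qf b + bet a b)"
    using bet_odd[OF ab(1)] by auto
  have "K \<in> {hexagon a (vneg b), hexagon a (vadd a b), hexagon b (vadd a b)}"
    using ADJ[OF ab(1)] assms ab(2) by simp
  then consider "K = hexagon a (vneg b)" | "K = hexagon a (vadd a b)" | "K = hexagon b (vadd a b)" by blast
  then show ?thesis
  proof cases
    case 1
    have "bet a b \<noteq> 0" using o odd_ne0 by blast
    then show ?thesis using hgt_N(1)[OF ab(1)] 1 ab(2) by simp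
  next
    case 2
    have "2 * Qf a + bet a b \<noteq> 0" using o odd_ne0 by blast
    then show ?thesis using hgt_N(2)[OF ab(1)] 2 ab(2) by simp
  next
    case 3
    have "2 * Qf b + bet a b \<noteq> 0" using o odd_ne0 by blast
    then show ?thesis using hgt_N(3)[OF ab(1)] 3 ab(2) by simp
  qed
qed

lemma P2:
  assumes "adj H K1" "adj H K2" "hgt K1 < hgt H" "hgt K2 < hgt H"
  shows "K1 = K2"
proof -
  from assms obtain a b where ab: "is_basis a b" "H = hexagon a b"
    unfolding adj_def admissible_def by blast
  have q: "Qf a \<ge> 0" "Qf b \<ge> 0" "Qf a + Qf b + bet a b \<ge> 0"
    using Qf_nonneg[of a] Qf_nonneg[of b] Qf_nonneg[of "vadd a b"] Qf_add[of a b] by auto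
  have "K1 \<in> {hexagon a (vneg b), hexagon a (vadd a b), hexagon b (vadd a b)}"
       "K2 \<in> {hexagon a (vneg b), hexagon a (vadd a b), hexagon b (vadd a b)}"
    using ADJ[OF ab(1)] assms ab(2) by simp_all
  then show ?thesis using hgt_N[OF ab(1)] ab(2) assms(3,4) q by auto
qed

lemma adj_sym: "adj H K \<Longrightarrow> adj K H"
  unfolding adj_def by blast

lemma adj_neq: "adj H K \<Longrightarrow> H \<noteq> K"
  unfolding adj_def by blast

lemma adm_hex: "is_basis a b \<Longrightarrow> admissible (hexagon a b)"
  unfolding admissible_def by blast

lemma adj_N:
  assumes "is_basis a b"
  shows "adj (hexagon a b) (hexagon a (vneg b))"
    "adj (hexagon a b) (hexagon a (vadd a b))"
    "adj (hexagon a b) (hexagon b (vadd a b))"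
proof -
  have o: "odd (bet a b)" "odd (2 * Qf a + bet a b)" "odd (2 * Qf b + bet a b)"
    using bet_odd[OF assms] by auto
  note ne = odd_ne0[OF o(1)] odd_ne0[OF o(2)] odd_ne0[OF o(3)]
  note d = hex_distinct[OF assms]
  show "adj (hexagon a b) (hexagon a (vneg b))"
    unfolding adj_def
  proof (intro conjI exI)
    show "hexagon a b \<noteq> hexagon a (vneg b)" using hgt_N(1)[OF assms] ne by auto
    show "{a, vneg a, b, vneg b} \<subseteq> hexagon a b \<inter> hexagon a (vneg b)" by (auto simp: hexagon_def)
  qed (use d assms basis_anb adm_hex in auto)
  show "adj (hexagon a b) (hexagon a (vadd a b))"
    unfolding adj_def
  proof (intro conjI exI)
    show "hexagon a b \<noteq> hexagon a (vadd a b)" using hgt_N(2)[OF assms] ne by auto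
    show "{a, vneg a, vadd a b, vneg (vadd a b)} \<subseteq> hexagon a b \<inter> hexagon a (vadd a b)"
      by (auto simp: hexagon_def)
  qed (use d assms basis_ab adm_hex in auto)
  show "adj (hexagon a b) (hexagon b (vadd a b))"
    unfolding adj_def
  proof (intro conjI exI)
    show "hexagon a b \<noteq> hexagon b (vadd a b)" using hgt_N(3)[OF assms] ne by auto
    show "{b, vneg b, vadd a b, vneg (vadd a b)} \<subseteq> hexagon a b \<inter> hexagon b (vadd a b)"
      by (auto simp: hexagon_def)
  qed (use d assms basis_ba adm_hex in auto)
qed

lemma int_key:
  fixes p q t :: int
  assumes "odd t" "t \<le> 0" "2*p + t \<ge> 0" "2*q + t \<ge> 0" "t^2 = 4*p*q - 3" "p \<ge> 0" "q \<ge> 0"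
  shows "p = 1 \<and> q = 1 \<and> t = -1"
proof -
  have t0: "t < 0" using assms(1,2) by (metis odd_ne0 order_le_less)
  have "odd (2*p+t)" "odd (2*q+t)" using assms(1) by auto
  then have p1: "2*p + t \<ge> 1" and q1: "2*q + t \<ge> 1" using assms(3,4) odd_ne0 by fastforce+
  have main: "p = 1 \<and> q = 1 \<and> t = -1" if pq: "p \<le> q" "2*p + t \<ge> 1" "t < 0" "t^2 = 4*p*q - 3"
    for p q :: int
  proof -
    have "-t \<le> 2*p - 1" using pq by linarith
    moreover have "-t \<ge> 0" using pq by linarith
    ultimately have "(-t)^2 \<le> (2*p-1)^2" by (meson power_mono)
    then have "4*p*q - 3 \<le> 4*p*p - 4*p + 1" using pq(4) by (simp add: power2_eq_square algebra_simps)
    then have A: "p * (q - p + 1) \<le> 1" by (simp add: algebra_simps)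
    have p1: "p \<ge> 1" using pq by linarith
    have B: "q - p + 1 \<ge> 1" using pq by linarith
    have "p * (q - p + 1) \<ge> 1 * 1" using p1 B by (meson mult_mono zero_le_one order_trans)
    then have C: "p * (q - p + 1) = 1" using A by simp
    have "p \<le> p * (q - p + 1)" using p1 B by (simp add: mult_le_cancel_left1)
    then have "p = 1" using C p1 by simp
    then have "q = 1" using C by simp
    then have "t^2 = 1" using pq(4) \<open>p = 1\<close> by simp
    then have "t = 1 \<or> t = -1" by (simp add: power2_eq_1_iff)
    then show ?thesis using pq(3) \<open>p=1\<close> \<open>q=1\<close> by auto
  qed
  show ?thesis
  proof (cases "p \<le> q")
    case True then show ?thesis using main[of p q] p1 t0 assms(5) by blast
  next
    case False then show ?thesis using main[of q p] q1 t0 assms(5) by (simp add: mult.commute mult.left_commute)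
  qed
qed

lemma sq_le1: "(y::int)^2 \<le> 1 \<Longrightarrow> y = -1 \<or> y = 0 \<or> y = 1"
proof -
  assume "y^2 \<le> 1"
  then have "\<bar>y\<bar> \<le> 1" by (simp add: abs_square_le_1)
  then show ?thesis by auto
qed

lemma Qf1:
  assumes "Qf v = 1"
  shows "v \<in> {(1,0), (-1,0), (0,1), (0,-1), (1,-1), (-1,1)}"
proof (cases v)
  case (Pair x y)
  have e1: "4 = (2*x+y)^2 + 3*y^2" using assms Pair by (simp add: algebra_simps power2_eq_square)
  have e2: "4 = (2*y+x)^2 + 3*x^2" using assms Pair by (simp add: algebra_simps power2_eq_square)
  have "(2*x+y)^2 \<ge> 0" "(2*y+x)^2 \<ge> 0" by simp_all
  then have "y^2 \<le> 1" "x^2 \<le> 1" using e1 e2 by linarith+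
  then have "y = -1 \<or> y = 0 \<or> y = 1" "x = -1 \<or> x = 0 \<or> x = 1" using sq_le1 by blast+
  then show ?thesis using assms Pair by auto
qed

lemma W0_char:
  assumes "Qf a = 1" "Qf b = 1" "bet a b = -1"
  shows "hexagon a b = W0"
proof -
  have "a \<in> {(1,0), (-1,0), (0,1), (0,-1), (1,-1), (-1,1)}"
       "b \<in> {(1,0), (-1,0), (0,1), (0,-1), (1,-1), (-1,1)}" using Qf1 assms by blast+
  then show ?thesis using assms(3)
    by (elim insertE emptyE; simp add: hexagon_def W0_def set_eq_subset)
qed

lemma W0_hex: "W0 = hexagon (1,0) (-1,1)"
  by (simp add: hexagon_def W0_def set_eq_subset)

lemma basis_W0: "is_basis (1,0) (-1,1)"
  by (simp add: is_basis_def)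

lemma adm_W0: "admissible W0"
  unfolding W0_hex by (rule adm_hex[OF basis_W0])

lemma hgt_nonneg: "hgt H \<ge> 0"
  unfolding hgt_def by (rule sum_nonneg) (rule Qf_nonneg)

lemma LOWER:
  assumes "admissible H" "H \<noteq> W0"
  shows "\<exists>K. adj H K \<and> hgt K < hgt H"
proof -
  from assms obtain a b where ab: "is_basis a b" "H = hexagon a b"
    unfolding admissible_def by blast
  show ?thesis
  proof (cases "bet a b > 0")
    case True then show ?thesis using adj_N(1)[OF ab(1)] hgt_N(1)[OF ab(1)] ab(2) by (intro exI[of _ "hexagon a (vneg b)"]) simp
  next
    case F1: False
    show ?thesis
    proof (cases "2 * Qf a + bet a b < 0")
      case True then show ?thesis using adj_N(2)[OF ab(1)] hgt_N(2)[OF ab(1)] ab(2) by (intro exI[of _ "hexagon a (vadd a b)"]) simp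
    next
      case F2: False
      show ?thesis
      proof (cases "2 * Qf b + bet a b < 0")
        case True then show ?thesis using adj_N(3)[OF ab(1)] hgt_N(3)[OF ab(1)] ab(2) by (intro exI[of _ "hexagon b (vadd a b)"]) simp
      next
        case F3: False
        have "Qf a = 1 \<and> Qf b = 1 \<and> bet a b = -1"
          using int_key[of "bet a b" "Qf a" "Qf b"] F1 F2 F3 bet_odd[OF ab(1)] bet_sq[OF ab(1)]
            Qf_nonneg[of a] Qf_nonneg[of b] by linarith
        then have "H = W0" using W0_char ab(2) by blast
        then show ?thesis using assms(2) by blast
      qed
    qed
  qed
qed

definition nb :: "vec set list \<Rightarrow> bool" where
  "nb P \<longleftrightarrow> (\<forall>i. Suc (Suc i) < length P \<longrightarrow> P ! i \<noteq> P ! Suc (Suc i))"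

lemma adj_adm: "adj H K \<Longrightarrow> admissible H \<and> admissible K"
  unfolding adj_def by blast

lemma walk_nth_adm: "is_walk P \<Longrightarrow> i < length P \<Longrightarrow> admissible (P ! i)"
  unfolding is_walk_def by auto

lemma walk_adj: "is_walk P \<Longrightarrow> Suc i < length P \<Longrightarrow> adj (P ! i) (P ! Suc i)"
  unfolding is_walk_def by auto

lemma walk_ne: "is_walk P \<Longrightarrow> P \<noteq> []"
  unfolding is_walk_def by auto

lemma walk_single: "admissible H \<Longrightarrow> is_walk [H]"
  unfolding is_walk_def by auto

lemma walk_intro:
  assumes "P \<noteq> []" "\<And>i. Suc i < length P \<Longrightarrow> adj (P ! i) (P ! Suc i)" "admissible (P ! 0)"
  shows "is_walk P"
  unfolding is_walk_def
proof (intro conjI ballI allI impI)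
  show "P \<noteq> []" by fact
  fix V assume "V \<in> set P"
  then obtain i where i: "i < length P" "V = P ! i" by (auto simp: in_set_conv_nth)
  show "admissible V"
  proof (cases i)
    case 0 then show ?thesis using i assms(3) by simp
  next
    case (Suc j) then show ?thesis using i assms(2)[of j] adj_adm by auto
  qed
next
  fix i assume "Suc i < length P" then show "adj (P ! i) (P ! Suc i)" by (rule assms(2))
qed

lemma walk_rev: "is_walk P \<Longrightarrow> is_walk (rev P)"
proof -
  assume w: "is_walk P"
  show ?thesis
  proof (rule walk_intro)
    show "rev P \<noteq> []" using walk_ne[OF w] by simp
    show "admissible (rev P ! 0)" using walk_nth_adm[OF w] walk_ne[OF w] by (simp add: rev_nth)
    fix i assume i: "Suc i < length (rev P)"
    have "adj (P ! (length P - Suc (Suc i))) (P ! Suc (length P - Suc (Suc i)))"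
      using i walk_adj[OF w] by simp
    moreover have "Suc (length P - Suc (Suc i)) = length P - Suc i" using i by simp
    ultimately show "adj (rev P ! i) (rev P ! Suc i)" using i adj_sym by (simp add: rev_nth)
  qed
qed

lemma walk_sub:
  assumes w: "is_walk P" and ij: "i \<le> j" "j < length P"
  shows "is_walk (take (Suc j - i) (drop i P))"
proof (rule walk_intro)
  show "take (Suc j - i) (drop i P) \<noteq> []" using ij by simp
  show "admissible (take (Suc j - i) (drop i P) ! 0)" using ij walk_nth_adm[OF w] by simp
  fix k assume "Suc k < length (take (Suc j - i) (drop i P))"
  then have k: "Suc k < Suc j - i" "i + Suc k < length P" using ij by auto
  then show "adj (take (Suc j - i) (drop i P) ! k) (take (Suc j - i) (drop i P) ! Suc k)"
    using walk_adj[OF w, of "i + k"] by simp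
qed

lemma nb_sub:
  assumes "nb P" "i \<le> j" "j < length P"
  shows "nb (take (Suc j - i) (drop i P))"
  using assms unfolding nb_def by auto

lemma nb_rev: "nb P \<Longrightarrow> nb (rev P)"
  unfolding nb_def
proof (intro allI impI)
  fix i assume A: "\<forall>i. Suc (Suc i) < length P \<longrightarrow> P ! i \<noteq> P ! Suc (Suc i)" and i: "Suc (Suc i) < length (rev P)"
  have "P ! (length P - Suc (Suc (Suc i))) \<noteq> P ! Suc (Suc (length P - Suc (Suc (Suc i))))"
    using A i by simp
  moreover have "Suc (Suc (length P - Suc (Suc (Suc i)))) = length P - Suc i" using i by simp
  ultimately show "rev P ! i \<noteq> rev P ! Suc (Suc i)" using i by (simp add: rev_nth)
qed

lemma walk_append:
  assumes "is_walk P" "is_walk Q" "adj (last P) (hd Q)"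
  shows "is_walk (P @ Q)"
proof (rule walk_intro)
  show "P @ Q \<noteq> []" using walk_ne[OF assms(1)] by simp
  show "admissible ((P @ Q) ! 0)" using walk_nth_adm[OF assms(1)] walk_ne[OF assms(1)] by (simp add: nth_append)
  fix i assume i: "Suc i < length (P @ Q)"
  consider "Suc i < length P" | "Suc i = length P" | "Suc i > length P" by linarith
  then show "adj ((P @ Q) ! i) ((P @ Q) ! Suc i)"
  proof cases
    case 1 then show ?thesis using walk_adj[OF assms(1)] by (simp add: nth_append)
  next
    case 2
    then have ii: "i = length P - 1" by simp
    have "(P @ Q) ! i = last P" "(P @ Q) ! Suc i = hd Q"
      using 2 ii walk_ne[OF assms(1)] walk_ne[OF assms(2)] by (simp_all add: nth_append last_conv_nth hd_conv_nth)
    then show ?thesis using assms(3) by simp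
  next
    case 3
    then have "Suc (i - length P) < length Q" "Suc i - length P = Suc (i - length P)" using i by auto
    then show ?thesis using walk_adj[OF assms(2), of "i - length P"] 3 by (simp add: nth_append)
  qed
qed

lemma walk_map:
  assumes "is_walk P" "\<And>H K. adj H K \<Longrightarrow> adj (f H) (f K)" "\<And>H. admissible H \<Longrightarrow> admissible (f H)"
  shows "is_walk (map f P)"
proof (rule walk_intro)
  show "map f P \<noteq> []" using walk_ne[OF assms(1)] by simp
  show "admissible (map f P ! 0)" using walk_nth_adm[OF assms(1)] walk_ne[OF assms(1)] assms(3) by simp
  fix i assume "Suc i < length (map f P)"
  then show "adj (map f P ! i) (map f P ! Suc i)" using walk_adj[OF assms(1)] assms(2) by simp
qed

lemma nb_map: "nb P \<Longrightarrow> inj f \<Longrightarrow> nb (map f P)"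
  unfolding nb_def by (auto dest: injD)

lemma hgt_less_nat: "hgt K < hgt H \<Longrightarrow> nat (hgt K) < nat (hgt H)"
  using hgt_nonneg[of K] by simp

lemma UPALL:
  assumes w: "is_walk P" and n: "nb P" and l: "1 < length P" and u: "hgt (P ! 0) < hgt (P ! 1)"
  shows "Suc i < length P \<Longrightarrow> hgt (P ! i) < hgt (P ! Suc i)"
proof (induction i)
  case 0 then show ?case using u by simp
next
  case (Suc i)
  then have IH: "hgt (P ! i) < hgt (P ! Suc i)" by simp
  have a1: "adj (P ! Suc i) (P ! i)" using walk_adj[OF w, of i] Suc.prems adj_sym by simp
  have a2: "adj (P ! Suc i) (P ! Suc (Suc i))" using walk_adj[OF w, of "Suc i"] Suc.prems by simp
  have ne: "P ! i \<noteq> P ! Suc (Suc i)" using n Suc.prems unfolding nb_def by simp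
  have "hgt (P ! Suc (Suc i)) \<noteq> hgt (P ! Suc i)" using P1[OF a2] by simp
  moreover have "\<not> hgt (P ! Suc (Suc i)) < hgt (P ! Suc i)"
    using P2[OF a1 a2] IH ne by auto
  ultimately show ?case by simp
qed

lemma UPMONO:
  assumes w: "is_walk P" and n: "nb P" and l: "1 < length P" and u: "hgt (P ! 0) < hgt (P ! 1)"
  shows "0 < i \<Longrightarrow> i < length P \<Longrightarrow> hgt (P ! 0) < hgt (P ! i)"
proof (induction i)
  case 0 then show ?case by simp
next
  case (Suc i)
  show ?case
  proof (cases i)
    case 0 then show ?thesis using u by simp
  next
    case (Suc j)
    then have "hgt (P ! 0) < hgt (P ! i)" using Suc.IH Suc.prems by simp
    moreover have "hgt (P ! i) < hgt (P ! Suc i)" using UPALL[OF assms, of i] Suc.prems by simp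
    ultimately show ?thesis by simp
  qed
qed

lemma sub_facts:
  assumes "i \<le> j" "j < length P"
  shows "length (take (Suc j - i) (drop i P)) = Suc j - i"
    "\<And>k. k < Suc j - i \<Longrightarrow> take (Suc j - i) (drop i P) ! k = P ! (i + k)"
  using assms by auto

lemma rev_facts:
  assumes "k < length P"
  shows "rev P ! k = P ! (length P - Suc k)"
  using assms by (simp add: rev_nth)

lemma CLOSED_aux:
  "\<forall>Q. nat (hgt (Q!0)) = M \<longrightarrow> is_walk Q \<longrightarrow> nb Q \<longrightarrow> Q ! 0 = Q ! (length Q - 1) \<longrightarrow> length Q = 1"
proof (induction M rule: less_induct)
  case (less M)
  show ?case
  proof (intro allI impI)
    fix Q assume M: "nat (hgt (Q!0)) = M" and w: "is_walk Q" and n: "nb Q"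
      and c: "Q ! 0 = Q ! (length Q - 1)"
    define n where "n = length Q"
    have n1: "n \<ge> 1" using walk_ne[OF w] n_def by (cases Q) auto
    show "length Q = 1"
    proof (rule ccontr)
      assume "length Q \<noteq> 1"
      then have n2: "n \<ge> 2" using n1 n_def by simp
      have a01: "adj (Q!0) (Q!1)" using walk_adj[OF w, of 0] n2 n_def by simp
      have n3: "n \<ge> 3"
      proof (rule ccontr)
        assume "\<not> n \<ge> 3" then have "n = 2" using n2 by simp
        then have "Q!1 = Q!0" using c n_def by simp
        then show False using adj_neq[OF a01] by simp
      qed
      have d1: "hgt (Q!1) < hgt (Q!0)"
      proof -
        have "hgt (Q!0) \<noteq> hgt (Q!1)" using P1[OF a01] .
        moreover have "\<not> hgt (Q!0) < hgt (Q!1)"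
        proof
          assume "hgt (Q!0) < hgt (Q!1)"
          from UPMONO[OF w n _ this, of "n - 1"] n3 n_def have "hgt (Q!0) < hgt (Q!(n-1))" by simp
          then show False using c n_def by simp
        qed
        ultimately show ?thesis by simp
      qed
      have wr: "is_walk (rev Q)" "nb (rev Q)" using walk_rev[OF w] nb_rev[OF n] by auto
      have r: "rev Q ! 0 = Q ! (n - 1)" "rev Q ! 1 = Q ! (n - 2)" "rev Q ! (n - 1) = Q ! 0"
      proof -
        have "0 < length Q" using n3 n_def by linarith
        from rev_facts[OF this] show "rev Q ! 0 = Q ! (n - 1)" using n_def by simp
        show "rev Q ! 1 = Q ! (n - 2)" using rev_facts[of 1 Q] n3 n_def by (simp add: numeral_2_eq_2)
        show "rev Q ! (n - 1) = Q ! 0" using rev_facts[of "n-1" Q] n3 n_def by simp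
      qed
      have s: "Suc (n-2) = n - 1" "Suc (n-2) < length Q" using n3 n_def by auto
      have an: "adj (Q!(n-2)) (Q!(n-1))" using walk_adj[OF w s(2)] s(1) by simp
      have d2: "hgt (Q!(n-2)) < hgt (Q!0)"
      proof -
        have "hgt (Q!(n-2)) \<noteq> hgt (Q!(n-1))" using P1[OF an] .
        moreover have "\<not> hgt (rev Q ! 0) < hgt (rev Q ! 1)"
        proof
          assume "hgt (rev Q ! 0) < hgt (rev Q ! 1)"
          from UPMONO[OF wr(1) wr(2) _ this, of "n - 1"] n3 n_def have "hgt (rev Q ! 0) < hgt (rev Q ! (n-1))" by simp
          then show False using c r n_def by simp
        qed
        ultimately show ?thesis using r c n_def by simp
      qed
      have eq: "Q!1 = Q!(n-2)"
        using P2[OF a01 _ d1 d2] adj_sym[OF an] c n_def by simp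
      show False
      proof (cases "n = 3")
        case True
        then have "Q!0 \<noteq> Q!(Suc (Suc 0))" using n n_def unfolding nb_def by simp
        moreover have "Q!0 = Q!(Suc (Suc 0))" using c True n_def by (simp add: numeral_2_eq_2)
        ultimately show False by contradiction
      next
        case False
        then have n4: "n \<ge> 4" using n3 by simp
        define Q' where "Q' = take (Suc (n-2) - 1) (drop 1 Q)"
        have lQ': "length Q' = n - 2" using n4 n_def Q'_def by simp
        have q0: "Q' ! 0 = Q ! 1" using n4 n_def Q'_def by simp
        have "Suc (length Q - 3) = length Q - 2" using n4 n_def by simp
        then have ql: "Q' ! (length Q' - 1) = Q ! (n-2)" using n4 n_def Q'_def lQ'
          by simp
        have wQ': "is_walk Q'" using walk_sub[OF w, of 1 "n-2"] n4 n_def Q'_def by simp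
        have nQ': "nb Q'" using nb_sub[OF n, of 1 "n-2"] n4 n_def Q'_def by simp
        have lt: "nat (hgt (Q'!0)) < M" using M q0 hgt_less_nat[OF d1] by simp
        have "length Q' = 1"
          using less.IH[OF lt] wQ' nQ' q0 ql eq by auto
        then show False using lQ' n4 by simp
      qed
    qed
  qed
qed

lemma CLOSED: "is_walk Q \<Longrightarrow> nb Q \<Longrightarrow> Q ! 0 = Q ! (length Q - 1) \<Longrightarrow> length Q = 1"
  using CLOSED_aux by blast


lemma last_step:
  assumes "is_walk P" "2 \<le> length P"
  shows "adj (P ! (length P - 2)) (P ! (length P - 1))"
proof -
  have s: "Suc (length P - 2) = length P - 1" "Suc (length P - 2) < length P" using assms(2) by auto
  show ?thesis using walk_adj[OF assms(1) s(2)] s(1) by simp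
qed

lemma rev_last_facts:
  assumes "2 \<le> length P"
  shows "rev P ! 0 = P ! (length P - 1)" "rev P ! 1 = P ! (length P - 2)"
    "rev P ! (length P - 1) = P ! 0" "length (rev P) = length P"
proof -
  have "0 < length P" using assms by linarith
  from rev_facts[OF this] show "rev P ! 0 = P ! (length P - 1)" by simp
  have "1 < length P" using assms by linarith
  from rev_facts[OF this] show "rev P ! 1 = P ! (length P - 2)" by (simp add: numeral_2_eq_2)
  have "length P - 1 < length P" using assms by linarith
  from rev_facts[OF this] show "rev P ! (length P - 1) = P ! 0" using assms by simp
  show "length (rev P) = length P" by simp
qed

lemma last_down:
  assumes w: "is_walk Q" and n: "nb Q" and l: "2 \<le> length Q"
    and h: "hgt (Q ! 0) < hgt (Q ! (length Q - 1))"
  shows "hgt (Q ! (length Q - 2)) < hgt (Q ! (length Q - 1))"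
proof -
  have an: "adj (Q ! (length Q - 2)) (Q ! (length Q - 1))" using last_step[OF w l] .
  have wr: "is_walk (rev Q)" "nb (rev Q)" using walk_rev[OF w] nb_rev[OF n] by auto
  note r = rev_last_facts[OF l]
  have "hgt (Q!(length Q - 2)) \<noteq> hgt (Q!(length Q - 1))" using P1[OF an] .
  moreover have "\<not> hgt (rev Q ! 0) < hgt (rev Q ! 1)"
  proof
    assume "hgt (rev Q ! 0) < hgt (rev Q ! 1)"
    from UPMONO[OF wr(1) wr(2) _ this, of "length Q - 1"] l r
    have "hgt (rev Q ! 0) < hgt (rev Q ! (length Q - 1))" by simp
    then show False using h r by simp
  qed
  ultimately show ?thesis using r by simp
qed

lemma NBLEN_aux:
  "\<forall>P Q. nat (hgt (P!0)) + nat (hgt (P!(length P - 1))) = M \<longrightarrow> is_walk P \<longrightarrow> nb P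
     \<longrightarrow> is_walk Q \<longrightarrow> nb Q \<longrightarrow> P!0 = Q!0 \<longrightarrow> P!(length P - 1) = Q!(length Q - 1)
     \<longrightarrow> length P = length Q"
proof (induction M rule: less_induct)
  case (less M)
  have IH: "length P' = length Q'"
    if "nat (hgt (P'!0)) + nat (hgt (P'!(length P' - 1))) < M" "is_walk P'" "nb P'"
       "is_walk Q'" "nb Q'" "P'!0 = Q'!0" "P'!(length P' - 1) = Q'!(length Q' - 1)" for P' Q'
    using less.IH[OF that(1)] that(2-) by blast
  have upcase: "length P = length Q"
    if M: "nat (hgt (P!0)) + nat (hgt (P!(length P - 1))) = M" and
       wP: "is_walk P" and nP: "nb P" and wQ: "is_walk Q" and nQ: "nb Q" and
       e0: "P!0 = Q!0" and e1: "P!(length P - 1) = Q!(length Q - 1)" and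
       lP: "2 \<le> length P" and lQ: "2 \<le> length Q" and up: "hgt (P!0) < hgt (P!1)" for P Q
  proof -
    have s: "Suc (length P - 2) = length P - 1" "Suc (length P - 2) < length P" using lP by auto
    have u1: "hgt (P!(length P - 2)) < hgt (P!(length P - 1))"
      using UPALL[OF wP nP _ up, of "length P - 2"] lP s by simp
    have u2: "hgt (P!0) < hgt (P!(length P - 1))"
      using UPMONO[OF wP nP _ up, of "length P - 1"] lP by simp
    have u3: "hgt (Q!(length Q - 2)) < hgt (Q!(length Q - 1))"
      using last_down[OF wQ nQ lQ] u2 e0 e1 by simp
    have aP: "adj (P!(length P - 1)) (P!(length P - 2))" using last_step[OF wP lP] adj_sym by blast
    have aQ: "adj (P!(length P - 1)) (Q!(length Q - 2))" using last_step[OF wQ lQ] adj_sym e1 by simp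
    have v: "P!(length P - 2) = Q!(length Q - 2)" using P2[OF aP aQ u1] u3 e1 by simp
    define P' where "P' = take (Suc (length P - 2) - 0) (drop 0 P)"
    define Q' where "Q' = take (Suc (length Q - 2) - 0) (drop 0 Q)"
    have wP': "is_walk P'" "nb P'" using walk_sub[OF wP, of 0 "length P - 2"] nb_sub[OF nP, of 0 "length P - 2"] lP P'_def by auto
    have wQ': "is_walk Q'" "nb Q'" using walk_sub[OF wQ, of 0 "length Q - 2"] nb_sub[OF nQ, of 0 "length Q - 2"] lQ Q'_def by auto
    have lP': "length P' = length P - 1" using lP P'_def by simp
    have lQ': "length Q' = length Q - 1" using lQ Q'_def by simp
    have p0: "P'!0 = P!0" "Q'!0 = Q!0" using lP lQ P'_def Q'_def by simp_all
    have pl: "P'!(length P' - 1) = P!(length P - 2)" "Q'!(length Q' - 1) = Q!(length Q - 2)"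
      using lP lQ P'_def Q'_def lP' lQ' by (simp_all add: numeral_2_eq_2)
    have X: "nat (hgt (P!(length P - 2))) < nat (hgt (P!(length P - 1)))" by (rule hgt_less_nat[OF u1])
    have "nat (hgt (P'!0)) + nat (hgt (P'!(length P' - 1))) = nat (hgt (P!0)) + nat (hgt (P!(length P - 2)))"
      using p0 pl by simp
    then have "nat (hgt (P'!0)) + nat (hgt (P'!(length P' - 1))) < M"
      using X M by linarith
    then have "length P' = length Q'" using IH wP' wQ' p0 pl e0 v by simp
    then show ?thesis using lP' lQ' lP lQ by simp
  qed
  show ?case
  proof (intro allI impI)
    fix P Q assume M: "nat (hgt (P!0)) + nat (hgt (P!(length P - 1))) = M" and
       wP: "is_walk P" and nP: "nb P" and wQ: "is_walk Q" and nQ: "nb Q" and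
       e0: "P!0 = Q!0" and e1: "P!(length P - 1) = Q!(length Q - 1)"
    have lP1: "1 \<le> length P" using walk_ne[OF wP] by (cases P) auto
    have lQ1: "1 \<le> length Q" using walk_ne[OF wQ] by (cases Q) auto
    show "length P = length Q"
    proof (cases "length P = 1")
      case True
      then have "Q!0 = Q!(length Q - 1)" using e0 e1 by simp
      then have "length Q = 1" using CLOSED[OF wQ nQ] by simp
      then show ?thesis using True by simp
    next
      case F1: False
      show ?thesis
      proof (cases "length Q = 1")
        case True
        then have "P!0 = P!(length P - 1)" using e0 e1 by simp
        then have "length P = 1" using CLOSED[OF wP nP] by simp
        then show ?thesis using True by simp
      next
        case F2: False
        have lP: "2 \<le> length P" and lQ: "2 \<le> length Q" using F1 F2 lP1 lQ1 by auto
        show ?thesis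
        proof (cases "hgt (P!0) < hgt (P!1)")
          case True then show ?thesis using upcase[OF M wP nP wQ nQ e0 e1 lP lQ] by simp
        next
          case F3: False
          show ?thesis
          proof (cases "hgt (Q!0) < hgt (Q!1)")
            case True
            have M': "nat (hgt (Q!0)) + nat (hgt (Q!(length Q - 1))) = M" using M e0 e1 by simp
            show ?thesis using upcase[OF M' wQ nQ wP nP e0[symmetric] e1[symmetric] lQ lP True] by simp
          next
            case F4: False
            have aP: "adj (P!0) (P!1)" using walk_adj[OF wP, of 0] lP by simp
            have aQ: "adj (P!0) (Q!1)" using walk_adj[OF wQ, of 0] lQ e0 by simp
            have dP: "hgt (P!1) < hgt (P!0)" using P1[OF aP] F3 by simp
            have dQ: "hgt (Q!1) < hgt (P!0)" using P1[OF aQ] F4 e0 by simp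
            have v: "P!1 = Q!1" using P2[OF aP aQ dP dQ] .
            define P' where "P' = take (Suc (length P - 1) - 1) (drop 1 P)"
            define Q' where "Q' = take (Suc (length Q - 1) - 1) (drop 1 Q)"
            have wP': "is_walk P'" "nb P'" using walk_sub[OF wP, of 1 "length P - 1"] nb_sub[OF nP, of 1 "length P - 1"] lP P'_def by auto
            have wQ': "is_walk Q'" "nb Q'" using walk_sub[OF wQ, of 1 "length Q - 1"] nb_sub[OF nQ, of 1 "length Q - 1"] lQ Q'_def by auto
            have lP': "length P' = length P - 1" using lP P'_def by simp
            have lQ': "length Q' = length Q - 1" using lQ Q'_def by simp
            have p0: "P'!0 = P!1" "Q'!0 = Q!1" using lP lQ P'_def Q'_def by simp_all
            have "Suc (length P - Suc (Suc 0)) = length P - Suc 0" "Suc (length Q - Suc (Suc 0)) = length Q - Suc 0" using lP lQ by auto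
            then have pl: "P'!(length P' - 1) = P!(length P - 1)" "Q'!(length Q' - 1) = Q!(length Q - 1)"
              using lP lQ P'_def Q'_def lP' lQ' by simp_all
            have X: "nat (hgt (P!1)) < nat (hgt (P!0))" by (rule hgt_less_nat[OF dP])
            have "nat (hgt (P'!0)) + nat (hgt (P'!(length P' - 1))) = nat (hgt (P!1)) + nat (hgt (P!(length P - 1)))"
              using p0 pl by simp
            then have "nat (hgt (P'!0)) + nat (hgt (P'!(length P' - 1))) < M"
              using X M by linarith
            then have "length P' = length Q'" using IH wP' wQ' p0 pl e1 v by simp
            then show ?thesis using lP' lQ' lP lQ by simp
          qed
        qed
      qed
    qed
  qed
qed

lemma NBLEN:
  "is_walk P \<Longrightarrow> nb P \<Longrightarrow> is_walk Q \<Longrightarrow> nb Q \<Longrightarrow> P!0 = Q!0 \<Longrightarrow>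
   P!(length P - 1) = Q!(length Q - 1) \<Longrightarrow> length P = length Q"
  using NBLEN_aux by blast

lemma walk_glue:
  assumes "is_walk P" "is_walk Q" "last P = hd Q"
  shows "is_walk (P @ tl Q) \<and> hd (P @ tl Q) = hd P \<and> last (P @ tl Q) = last Q
    \<and> length (P @ tl Q) = length P + length Q - 1"
proof (cases "tl Q = []")
  case True
  have "Q \<noteq> []" using walk_ne[OF assms(2)] .
  then have "last Q = hd Q" "length Q = 1" using True by (cases Q; simp)+
  then show ?thesis using True assms walk_ne[OF assms(1)] by simp
next
  case False
  have nQ: "Q \<noteq> []" using walk_ne[OF assms(2)] .
  have l2: "2 \<le> length Q" using False nQ by (cases Q; cases "tl Q") auto
  have wt: "is_walk (tl Q)"
  proof -
    have "is_walk (take (Suc (length Q - 1) - 1) (drop 1 Q))" using walk_sub[OF assms(2), of 1 "length Q - 1"] l2 by simp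
    then show ?thesis using l2 by (simp add: drop_Suc)
  qed
  have "adj (Q!0) (Q!1)" using walk_adj[OF assms(2), of 0] l2 by simp
  moreover have "Q!0 = hd Q" "Q!1 = hd (tl Q)" using nQ False by (cases Q; cases "tl Q"; simp)+
  ultimately have a: "adj (last P) (hd (tl Q))" using assms(3) by simp
  have "is_walk (P @ tl Q)" using walk_append[OF assms(1) wt a] .
  moreover have "last (tl Q) = last Q" using False nQ by (cases Q) auto
  moreover have "length Q \<ge> 1" using nQ by (cases Q) auto
  ultimately show ?thesis using False walk_ne[OF assms(1)] nQ by auto
qed

lemma dist_le:
  assumes "is_walk Vs" "hd Vs = H" "last Vs = K"
  shows "dist_G H K \<le> length Vs - 1"
proof -
  have "length Vs = Suc (length Vs - 1)" using walk_ne[OF assms(1)] by (cases Vs) auto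
  then show ?thesis unfolding dist_G_def using assms by (intro Least_le) blast
qed

lemma dist_ex:
  assumes "is_walk Vs" "hd Vs = H" "last Vs = K"
  shows "\<exists>W. is_walk W \<and> length W = Suc (dist_G H K) \<and> hd W = H \<and> last W = K"
proof -
  have "length Vs = Suc (length Vs - 1)" using walk_ne[OF assms(1)] by (cases Vs) auto
  then have "\<exists>n W. is_walk W \<and> length W = Suc n \<and> hd W = H \<and> last W = K" using assms by blast
  then show ?thesis unfolding dist_G_def by (rule LeastI_ex)
qed

lemma walk_snoc:
  assumes "is_walk P" "adj (last P) H"
  shows "is_walk (P @ [H])"
  using walk_append[OF assms(1) walk_single] assms adj_adm by auto

lemma conn_W0_aux:
  "\<forall>H. nat (hgt H) = M \<longrightarrow> admissible H \<longrightarrow> (\<exists>Vs. is_walk Vs \<and> hd Vs = W0 \<and> last Vs = H)"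
proof (induction M rule: less_induct)
  case (less M)
  show ?case
  proof (intro allI impI)
    fix H assume M: "nat (hgt H) = M" and a: "admissible H"
    show "\<exists>Vs. is_walk Vs \<and> hd Vs = W0 \<and> last Vs = H"
    proof (cases "H = W0")
      case True then show ?thesis using walk_single[OF a] by (intro exI[of _ "[H]"]) simp
    next
      case False
      obtain K where K: "adj H K" "hgt K < hgt H" using LOWER[OF a False] by blast
      have "nat (hgt K) < M" using hgt_less_nat[OF K(2)] M by simp
      then obtain Vs where Vs: "is_walk Vs" "hd Vs = W0" "last Vs = K"
        using less.IH adj_adm[OF K(1)] by blast
      have "is_walk (Vs @ [H])" using walk_snoc[OF Vs(1)] Vs(3) adj_sym[OF K(1)] by simp
      then show ?thesis using Vs walk_ne[OF Vs(1)] by (intro exI[of _ "Vs @ [H]"]) simp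
    qed
  qed
qed

lemma conn:
  assumes "admissible H" "admissible K"
  shows "\<exists>Vs. is_walk Vs \<and> hd Vs = H \<and> last Vs = K"
proof -
  obtain A where A: "is_walk A" "hd A = W0" "last A = H" using conn_W0_aux assms(1) by blast
  obtain B where B: "is_walk B" "hd B = W0" "last B = K" using conn_W0_aux assms(2) by blast
  have "is_walk (rev A)" "last (rev A) = hd B" "hd (rev A) = H"
    using walk_rev[OF A(1)] A B walk_ne[OF A(1)] by (simp_all add: hd_rev last_rev)
  from walk_glue[OF this(1) B(1) this(2)] show ?thesis using B(3) \<open>hd (rev A) = H\<close> by blast
qed

lemma geo:
  assumes "admissible H" "admissible K"
  obtains W where "is_walk W" "length W = Suc (dist_G H K)" "hd W = H" "last W = K"
  using conn[OF assms] dist_ex by blast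

lemma geo_nb:
  assumes w: "is_walk Vs" and l: "length Vs = Suc (dist_G H K)" and h: "hd Vs = H" "last Vs = K"
  shows "nb Vs"
  unfolding nb_def
proof (intro allI impI notI)
  fix i assume i: "Suc (Suc i) < length Vs" and e: "Vs ! i = Vs ! Suc (Suc i)"
  define A where "A = take (Suc i - 0) (drop 0 Vs)"
  define B where "B = take (Suc (length Vs - 1) - Suc (Suc i)) (drop (Suc (Suc i)) Vs)"
  have wA: "is_walk A" using walk_sub[OF w, of 0 i] i A_def by simp
  have wB: "is_walk B" using walk_sub[OF w, of "Suc (Suc i)" "length Vs - 1"] i B_def by simp
  have lA: "length A = Suc i" using i A_def by simp
  have lB: "length B = length Vs - Suc (Suc i)" using i B_def by simp
  have "A \<noteq> []" using lA by auto
  then have "last A = A ! i" using lA by (simp add: last_conv_nth)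
  then have "last A = Vs ! i" using A_def by simp
  moreover have "hd B = Vs ! Suc (Suc i)" using i B_def by (simp add: hd_conv_nth)
  ultimately have j: "last A = hd B" using e by simp
  have hA: "hd A = H" using h i A_def walk_ne[OF w] by (simp add: hd_conv_nth)
  have "B = drop (Suc (Suc i)) Vs" using B_def i by simp
  then have lB2: "last B = K" using h i by (simp add: last_drop)
  from walk_glue[OF wA wB j] have
    "is_walk (A @ tl B)" "hd (A @ tl B) = H" "last (A @ tl B) = K" "length (A @ tl B) = length A + length B - 1"
    using hA lB2 by auto
  from dist_le[OF this(1-3)] this(4) lA lB i l show False by simp
qed

lemma nb_dist:
  assumes "is_walk P" "nb P"
  shows "dist_G (hd P) (last P) = length P - 1"
proof -
  obtain W where W: "is_walk W" "length W = Suc (dist_G (hd P) (last P))" "hd W = hd P" "last W = last P"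
    using dist_ex[OF assms(1) refl refl] by blast
  have nW: "nb W" using geo_nb[OF W] .
  have ne: "P \<noteq> []" "W \<noteq> []" using walk_ne assms(1) W(1) by auto
  have "length P = length W"
    using NBLEN[OF assms W(1) nW] W(3,4) ne by (simp add: hd_conv_nth last_conv_nth)
  then show ?thesis using W(2) by simp
qed

lemma dist_tri:
  assumes "admissible H" "admissible K" "admissible L"
  shows "dist_G H L \<le> dist_G H K + dist_G K L"
proof -
  obtain A where A: "is_walk A" "length A = Suc (dist_G H K)" "hd A = H" "last A = K" using geo assms by blast
  obtain B where B: "is_walk B" "length B = Suc (dist_G K L)" "hd B = K" "last B = L" using geo assms by blast
  from walk_glue[OF A(1) B(1)] A(4) B(3) have
    "is_walk (A @ tl B)" "hd (A @ tl B) = H" "last (A @ tl B) = L" "length (A @ tl B) = length A + length B - 1"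
    using A B by auto
  from dist_le[OF this(1-3)] this(4) A(2) B(2) show ?thesis by simp
qed

lemma dist_sym_le:
  assumes "admissible H" "admissible K"
  shows "dist_G K H \<le> dist_G H K"
proof -
  obtain A where A: "is_walk A" "length A = Suc (dist_G H K)" "hd A = H" "last A = K" using geo assms by blast
  have "is_walk (rev A)" "hd (rev A) = K" "last (rev A) = H"
    using walk_rev[OF A(1)] A walk_ne[OF A(1)] by (simp_all add: hd_rev last_rev)
  from dist_le[OF this] A(2) show ?thesis by simp
qed

lemma dist_sym:
  assumes "admissible H" "admissible K"
  shows "dist_G K H = dist_G H K"
  using dist_sym_le[OF assms] dist_sym_le[OF assms(2,1)] by simp

lemma dist_0:
  assumes "admissible H" "admissible K" "dist_G H K = 0"
  shows "H = K"
proof -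
  obtain A where A: "is_walk A" "length A = Suc (dist_G H K)" "hd A = H" "last A = K" using geo assms by blast
  then have "length A = 1" using assms(3) by simp
  then obtain x where "A = [x]" by (cases A) auto
  then show ?thesis using A by simp
qed

lemma dist_refl: "dist_G H H = 0" if "admissible H"
  using dist_le[OF walk_single[OF that], of H H] by simp

lemma T1:
  assumes a: "adj x x'" and y: "admissible y"
  shows "dist_G x y \<noteq> dist_G x' y"
proof -
  have ax: "admissible x" "admissible x'" using adj_adm[OF a] by auto
  obtain Q where Q: "is_walk Q" "length Q = Suc (dist_G x y)" "hd Q = x" "last Q = y" using geo ax(1) y by blast
  have nQ: "nb Q" using geo_nb[OF Q] .
  show ?thesis
  proof (cases "dist_G x y = 0")
    case True
    then have "x = y" using dist_0 ax(1) y by blast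
    have "is_walk [x', x]" using walk_append[OF walk_single[OF ax(2)] walk_single[OF ax(1)]] adj_sym[OF a] by simp
    moreover have "nb [x', x]" unfolding nb_def by simp
    ultimately have "dist_G (hd [x', x]) (last [x', x]) = length [x', x] - 1" by (rule nb_dist)
    then have "dist_G x' x = 1" by simp
    then show ?thesis using True \<open>x = y\<close> by simp
  next
    case nz: False
    then have l2: "2 \<le> length Q" using Q(2) by simp
    have q0: "Q!0 = x" using Q(3) walk_ne[OF Q(1)] by (simp add: hd_conv_nth)
    show ?thesis
    proof (cases "Q!1 = x'")
      case True
      define Q' where "Q' = take (Suc (length Q - 1) - 1) (drop 1 Q)"
      have wQ': "is_walk Q'" "nb Q'" using walk_sub[OF Q(1), of 1 "length Q - 1"] nb_sub[OF nQ, of 1 "length Q - 1"] l2 Q'_def by auto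
      have "Q' = drop 1 Q" using Q'_def l2 by simp
      then have "hd Q' = x'" "last Q' = y" "length Q' = length Q - 1" using True l2 Q(4)
        by (simp_all add: hd_drop_conv_nth last_drop)
      then have "dist_G x' y = length Q - 2" using nb_dist[OF wQ'] by simp
      then show ?thesis using Q(2) nz by simp
    next
      case False
      have w: "is_walk (x' # Q)"
        using walk_append[OF walk_single[OF ax(2)] Q(1)] Q(3) adj_sym[OF a] by simp
      have "nb (x' # Q)" unfolding nb_def
      proof (intro allI impI)
        fix i assume i: "Suc (Suc i) < length (x' # Q)"
        show "(x' # Q) ! i \<noteq> (x' # Q) ! Suc (Suc i)"
        proof (cases i)
          case 0 then show ?thesis using False by simp
        next
          case (Suc j) then show ?thesis using nQ i unfolding nb_def by simp
        qed
      qed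
      then have "dist_G x' y = length Q" using nb_dist[OF w] Q(4) walk_ne[OF Q(1)] by simp
      then show ?thesis using Q(2) by simp
    qed
  qed
qed

lemma ma_neg: "mat_apply A (vneg v) = vneg (mat_apply A v)"
  by (cases A; cases v) (simp add: algebra_simps)
lemma ma_add: "mat_apply A (vadd u v) = vadd (mat_apply A u) (mat_apply A v)"
  by (cases A; cases u; cases v) (simp add: algebra_simps)
lemma ma_det: "vdet (mat_apply A u) (mat_apply A v) = mat_det A * vdet u v"
  by (cases A; cases u; cases v) (simp add: algebra_simps)
lemma ma_mult: "mat_apply (mat_mult A B) v = mat_apply A (mat_apply B v)"
  by (cases A; cases B; cases v) (simp add: algebra_simps)
lemma det_mult: "mat_det (mat_mult A B) = mat_det A * mat_det B"
  by (cases A; cases B) (simp add: algebra_simps)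
lemma ma_inv1: "mat_det A = 1 \<Longrightarrow> mat_apply (sl2_inv A) (mat_apply A v) = v"
proof (cases A; cases v)
  fix a b c d x y assume "A = (a,b,c,d)" "v = (x,y)" "mat_det A = 1"
  then have "a*d - b*c = 1" by simp
  moreover have "d * (a * x + b * y) + - b * (c * x + d * y) = (a*d - b*c) * x"
    "- c * (a * x + b * y) + a * (c * x + d * y) = (a*d - b*c) * y" by (simp_all add: algebra_simps)
  ultimately show "mat_apply (sl2_inv A) (mat_apply A v) = v" using \<open>A = _\<close> \<open>v = _\<close> by simp
qed
lemma ma_inv2: "mat_det A = 1 \<Longrightarrow> mat_apply A (mat_apply (sl2_inv A) v) = v"
proof (cases A; cases v)
  fix a b c d x y assume "A = (a,b,c,d)" "v = (x,y)" "mat_det A = 1"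
  then have "a*d - b*c = 1" by simp
  moreover have "a * (d * x + - b * y) + b * (- c * x + a * y) = (a*d - b*c) * x"
    "c * (d * x + - b * y) + d * (- c * x + a * y) = (a*d - b*c) * y" by (simp_all add: algebra_simps)
  ultimately show "mat_apply A (mat_apply (sl2_inv A) v) = v" using \<open>A = _\<close> \<open>v = _\<close> by simp
qed

lemma inv_SL2: "A \<in> SL2 \<Longrightarrow> sl2_inv A \<in> SL2"
  by (cases A) (simp add: SL2_def algebra_simps)
lemma mult_SL2: "A \<in> SL2 \<Longrightarrow> B \<in> SL2 \<Longrightarrow> mat_mult A B \<in> SL2"
  by (simp add: SL2_def det_mult)

lemma act_hex: "act A (hexagon a b) = hexagon (mat_apply A a) (mat_apply A b)"
  by (simp add: act_def hexagon_def ma_neg ma_add)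

lemma adm_act: "A \<in> SL2 \<Longrightarrow> admissible H \<Longrightarrow> admissible (act A H)"
  unfolding admissible_def
proof -
  assume A: "A \<in> SL2" and "\<exists>a b. is_basis a b \<and> H = hexagon a b"
  then obtain a b where ab: "is_basis a b" "H = hexagon a b" by blast
  have "is_basis (mat_apply A a) (mat_apply A b)" using ab(1) A by (simp add: is_basis_def ma_det SL2_def)
  then show "\<exists>a b. is_basis a b \<and> act A H = hexagon a b" using ab(2) act_hex by blast
qed

lemma act_mult: "act (mat_mult A B) H = act A (act B H)"
  by (simp add: act_def ma_mult image_image)

lemma act_inv1: "A \<in> SL2 \<Longrightarrow> act (sl2_inv A) (act A H) = H"
  by (simp add: act_def image_image ma_inv1 SL2_def)
lemma act_inv2: "A \<in> SL2 \<Longrightarrow> act A (act (sl2_inv A) H) = H"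
  by (simp add: act_def image_image ma_inv2 SL2_def)

lemma inj_act: assumes A: "A \<in> SL2" shows "inj (act A)"
proof (rule injI)
  fix H K assume "act A H = act A K"
  then have "act (sl2_inv A) (act A H) = act (sl2_inv A) (act A K)" by simp
  then show "H = K" using act_inv1[OF A] by simp
qed

lemma inj_ma: assumes A: "A \<in> SL2" shows "inj (mat_apply A)"
proof (rule injI)
  have d: "mat_det A = 1" using A by (simp add: SL2_def)
  fix u v assume "mat_apply A u = mat_apply A v"
  then have "mat_apply (sl2_inv A) (mat_apply A u) = mat_apply (sl2_inv A) (mat_apply A v)" by simp
  then show "u = v" using ma_inv1[OF d] by simp
qed

lemma adj_act:
  assumes A: "A \<in> SL2" and a: "adj H K"
  shows "adj (act A H) (act A K)"
proof -
  from a obtain s m where H: "admissible H" "admissible K" "H \<noteq> K"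
    "{s, vneg s, m, vneg m} \<subseteq> H \<inter> K" "m \<noteq> s" "m \<noteq> vneg s"
    unfolding adj_def by blast
  have i: "inj (mat_apply A)" using inj_ma[OF A] .
  show ?thesis unfolding adj_def
  proof (intro conjI exI)
    show "admissible (act A H)" "admissible (act A K)" using adm_act[OF A] H by auto
    show "act A H \<noteq> act A K" using H(3) inj_act[OF A] by (auto dest: injD)
    show "{mat_apply A s, vneg (mat_apply A s), mat_apply A m, vneg (mat_apply A m)} \<subseteq> act A H \<inter> act A K"
      using H(4) by (auto simp: act_def ma_neg[symmetric])
    show "mat_apply A m \<noteq> mat_apply A s" using H(5) i by (auto dest: injD)
    show "mat_apply A m \<noteq> vneg (mat_apply A s)" using H(6) i by (auto simp: ma_neg[symmetric] dest: injD)
  qed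
qed

lemma walk_act: assumes "A \<in> SL2" "is_walk P" shows "is_walk (map (act A) P)"
  by (rule walk_map[OF assms(2)]) (simp_all add: adj_act[OF assms(1)] adm_act[OF assms(1)])

lemma nb_act: assumes "A \<in> SL2" "nb P" shows "nb (map (act A) P)"
  by (rule nb_map[OF assms(2) inj_act[OF assms(1)]])

lemma dist_act:
  assumes A: "A \<in> SL2"
  shows "dist_G (act A H) (act A K) = dist_G H K"
proof -
  have A': "sl2_inv A \<in> SL2" using inv_SL2[OF A] .
  have "(\<exists>Vs. is_walk Vs \<and> length Vs = Suc n \<and> hd Vs = act A H \<and> last Vs = act A K) =
        (\<exists>Vs. is_walk Vs \<and> length Vs = Suc n \<and> hd Vs = H \<and> last Vs = K)" for n
  proof
    assume "\<exists>Vs. is_walk Vs \<and> length Vs = Suc n \<and> hd Vs = act A H \<and> last Vs = act A K"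
    then obtain Vs where V: "is_walk Vs" "length Vs = Suc n" "hd Vs = act A H" "last Vs = act A K" by blast
    have ne: "Vs \<noteq> []" using walk_ne[OF V(1)] .
    show "\<exists>Vs. is_walk Vs \<and> length Vs = Suc n \<and> hd Vs = H \<and> last Vs = K"
      using walk_act[OF A' V(1)] V ne act_inv1[OF A]
      by (intro exI[of _ "map (act (sl2_inv A)) Vs"]) (simp add: hd_map last_map)
  next
    assume "\<exists>Vs. is_walk Vs \<and> length Vs = Suc n \<and> hd Vs = H \<and> last Vs = K"
    then obtain Vs where V: "is_walk Vs" "length Vs = Suc n" "hd Vs = H" "last Vs = K" by blast
    have ne: "Vs \<noteq> []" using walk_ne[OF V(1)] .
    show "\<exists>Vs. is_walk Vs \<and> length Vs = Suc n \<and> hd Vs = act A H \<and> last Vs = act A K"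
      using walk_act[OF A V(1)] V ne
      by (intro exI[of _ "map (act A) Vs"]) (simp add: hd_map last_map)
  qed
  then show ?thesis unfolding dist_G_def by simp
qed

fun mpow :: "mat2 \<Rightarrow> nat \<Rightarrow> mat2" where
  "mpow A 0 = (1, 0, 0, 1)"
| "mpow A (Suc k) = mat_mult A (mpow A k)"

lemma mpow_SL2: "A \<in> SL2 \<Longrightarrow> mpow A k \<in> SL2"
  by (induction k) (auto simp: SL2_def det_mult)

lemma act_id: "act (1, 0, 0, 1) H = H"
proof -
  have "mat_apply (1, 0, 0, 1) v = v" for v by (cases v) simp
  then show ?thesis by (simp add: act_def)
qed

lemma act_mpow_Suc: "act (mpow A (Suc k)) H = act A (act (mpow A k) H)"
  by (simp add: act_mult)

lemma act_mpow_Suc2: "act (mpow A (Suc k)) H = act (mpow A k) (act A H)"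
proof (induction k arbitrary: H)
  case 0 then show ?case by (simp add: act_mult act_id)
next
  case (Suc k)
  have "act (mpow A (Suc (Suc k))) H = act A (act (mpow A (Suc k)) H)" by (rule act_mpow_Suc)
  also have "\<dots> = act A (act (mpow A k) (act A H))" using Suc by simp
  also have "\<dots> = act (mpow A (Suc k)) (act A H)" by (simp add: act_mult)
  finally show ?case .
qed

lemma vadd_comm: "vadd a b = vadd b a" by (cases a; cases b) (simp add: add.commute)
lemma hex_swap: "hexagon a b = hexagon b a"
  unfolding hexagon_def by (simp add: vadd_comm insert_commute)

lemma W0_hex2: "W0 = hexagon (1,0) (-1,1)" by (rule W0_hex)

lemma transitive:
  assumes "admissible H"
  shows "\<exists>B\<in>SL2. H = act B W0"
proof -
  have main: "\<exists>B\<in>SL2. hexagon a b = act B W0" if "vdet a b = 1" for a b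
  proof (cases a; cases b)
    fix a1 a2 b1 b2 assume ab: "a = (a1,a2)" "b = (b1,b2)"
    define B where "B = (a1, a1 + b1, a2, a2 + b2)"
    have "B \<in> SL2" using that ab by (simp add: B_def SL2_def algebra_simps)
    moreover have "act B W0 = hexagon a b" unfolding W0_hex act_hex using ab by (simp add: B_def)
    ultimately show ?thesis by metis
  qed
  from assms obtain a b where ab: "is_basis a b" "H = hexagon a b" unfolding admissible_def by blast
  have "vdet a b = 1 \<or> vdet b a = 1" using ab(1) unfolding is_basis_def
    by (cases a; cases b) (auto simp: abs_if algebra_simps split: if_splits)
  then show ?thesis using main ab(2) hex_swap by metis
qed

lemma cplx_conj:
  assumes A: "A \<in> SL2" and B: "B \<in> SL2"
  shows "cplx (mat_mult (mat_mult (sl2_inv B) A) B) = dist_G (act B W0) (act A (act B W0))"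
proof -
  have "act (mat_mult (mat_mult (sl2_inv B) A) B) W0 = act (sl2_inv B) (act A (act B W0))"
    by (simp add: act_mult)
  then have "cplx (mat_mult (mat_mult (sl2_inv B) A) B) = dist_G W0 (act (sl2_inv B) (act A (act B W0)))"
    by (simp add: cplx_def)
  also have "\<dots> = dist_G (act B W0) (act B (act (sl2_inv B) (act A (act B W0))))"
    using dist_act[OF B] by simp
  also have "\<dots> = dist_G (act B W0) (act A (act B W0))" using act_inv2[OF B] by simp
  finally show ?thesis .
qed

lemma minimal_iff:
  assumes A: "A \<in> SL2"
  shows "minimal A \<longleftrightarrow> (\<forall>y. admissible y \<longrightarrow> cplx A \<le> dist_G y (act A y))"
proof
  assume m: "minimal A"
  show "\<forall>y. admissible y \<longrightarrow> cplx A \<le> dist_G y (act A y)"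
  proof (intro allI impI)
    fix y assume "admissible y"
    then obtain B where B: "B \<in> SL2" "y = act B W0" using transitive by blast
    have "cplx A \<le> cplx (mat_mult (mat_mult (sl2_inv B) A) B)" using m B(1) unfolding minimal_def by blast
    then show "cplx A \<le> dist_G y (act A y)" using cplx_conj[OF A B(1)] B(2) by simp
  qed
next
  assume h: "\<forall>y. admissible y \<longrightarrow> cplx A \<le> dist_G y (act A y)"
  show "minimal A" unfolding minimal_def
  proof
    fix B assume B: "B \<in> SL2"
    have "admissible (act B W0)" using adm_act[OF B adm_W0] .
    then show "cplx A \<le> cplx (mat_mult (mat_mult (sl2_inv B) A) B)" using h cplx_conj[OF A B] by simp
  qed
qed

lemma adm_actA: "A \<in> SL2 \<Longrightarrow> admissible (act A W0)"
  using adm_act adm_W0 by blast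

lemma part1:
  assumes A: "A \<in> SL2" and c: "cplx A \<le> 1"
  shows "minimal A"
proof (cases "cplx A = 0")
  case True then show ?thesis using minimal_iff[OF A] by simp
next
  case False
  then have c1: "dist_G W0 (act A W0) = 1" using c by (simp add: cplx_def)
  obtain W where W: "is_walk W" "length W = Suc (dist_G W0 (act A W0))" "hd W = W0" "last W = act A W0"
    using geo[OF adm_W0 adm_actA[OF A]] by blast
  have "W = [W ! 0, W ! 1]" using W(2) c1 by (cases W; cases "tl W") auto
  moreover have "adj (W!0) (W!1)" using walk_adj[OF W(1), of 0] W(2) c1 by simp
  ultimately have a: "adj W0 (act A W0)" using W(3,4) by (metis last_ConsL last_ConsR list.distinct(1) list.sel(1))
  show ?thesis unfolding minimal_iff[OF A]
  proof (intro allI impI)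
    fix y assume y: "admissible y"
    show "cplx A \<le> dist_G y (act A y)"
    proof (rule ccontr)
      assume "\<not> cplx A \<le> dist_G y (act A y)"
      then have "dist_G y (act A y) = 0" using c by simp
      then have fy: "act A y = y" using dist_0[OF y adm_act[OF A y]] by simp
      have "dist_G (act A W0) y = dist_G W0 y" using dist_act[OF A, of W0 y] fy by simp
      then show False using T1[OF a y] by simp
    qed
  qed
qed


lemma part2_neg:
  assumes A: "A \<in> SL2" and w: "is_walk Vs" and l: "length Vs = Suc (cplx A)"
    and h: "hd Vs = W0" "last Vs = act A W0" and c: "cplx A > 1"
    and e: "Vs ! (cplx A - 1) = act A (Vs ! 1)"
  shows "\<not> minimal A"
proof
  assume m: "minimal A"
  define p where "p = cplx A - 2"
  have p: "cplx A = Suc (Suc p)" using c p_def by simp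
  define S where "S = take (Suc (Suc p) - 1) (drop 1 Vs)"
  have wS: "is_walk S" using walk_sub[OF w, of 1 "Suc p"] l p S_def by simp
  have lS: "length S = Suc p" using S_def p l by simp
  have hS: "hd S = Vs ! 1" using S_def p l by (simp add: hd_conv_nth)
  have "S \<noteq> []" using lS by auto
  then have "last S = S ! p" using lS by (simp add: last_conv_nth)
  moreover have "S ! p = Vs ! Suc p" using S_def p l by simp
  ultimately have lS2: "last S = act A (Vs ! 1)" using e p by simp
  have "dist_G (Vs ! 1) (act A (Vs ! 1)) \<le> p" using dist_le[OF wS hS lS2] lS by simp
  moreover have "admissible (Vs ! 1)" using walk_nth_adm[OF w] l p by simp
  ultimately show False using m minimal_iff[OF A] p by fastforce
qed

lemma part2_pos:
  assumes A: "A \<in> SL2" and w: "is_walk Vs" and l: "length Vs = Suc (cplx A)"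
    and h: "hd Vs = W0" "last Vs = act A W0" and c: "cplx A > 1"
    and e: "Vs ! (cplx A - 1) \<noteq> act A (Vs ! 1)"
  shows "minimal A"
proof -
  define m where "m = cplx A"
  have m1: "m > 1" using c m_def by simp
  have lm: "length Vs = Suc m" using l m_def by simp
  have dm: "dist_G W0 (act A W0) = m" using m_def by (simp add: cplx_def)
  have nbV: "nb Vs" using geo_nb[OF w _ h] lm dm by simp
  have v0: "Vs ! 0 = W0" using h(1) w walk_ne by (simp add: hd_conv_nth)
  have vm: "Vs ! m = act A W0" using h(2) lm walk_ne[OF w] by (simp add: last_conv_nth)
  have e': "Vs ! (m - 1) \<noteq> act A (Vs ! 1)" using e m_def by simp
  define f where "f i = act (mpow A (i div m)) (Vs ! (i mod m))" for i
  have F: "f (q * m + r) = act (mpow A q) (Vs ! r)" if "r \<le> m" for q r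
  proof (cases "r < m")
    case True then show ?thesis using m1 by (simp add: f_def)
  next
    case False
    then have r: "r = m" using that by simp
    have "q * m + r = Suc q * m + 0" using r by simp
    then have "f (q * m + r) = act (mpow A (Suc q)) (Vs ! 0)" using m1 by (simp add: f_def)
    also have "\<dots> = act (mpow A q) (act A W0)" using v0 act_mpow_Suc2 by simp
    finally show ?thesis using vm r by simp
  qed
  have dec: "i = (i div m) * m + i mod m" "i mod m < m" for i
    using m1 by simp_all
  have Fi: "f i = act (mpow A (i div m)) (Vs ! (i mod m))" for i by (simp add: f_def)
  define L where "L k = map f [0..<Suc (k * m)]" for k
  have Lnth: "L k ! i = f i" if "i < Suc (k * m)" for k i using that by (simp add: L_def nth_map del: upt_Suc)
  have Llen: "length (L k) = Suc (k * m)" for k by (simp add: L_def del: upt_Suc)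
  have wL: "is_walk (L k)" for k
  proof (rule walk_intro)
    show "L k \<noteq> []" by (simp add: L_def)
    show "admissible (L k ! 0)" using Lnth[of 0 k] F[of 0 0] v0 adm_W0 act_id by simp
    fix i assume i: "Suc i < length (L k)"
    define q where "q = i div m"
    define r where "r = i mod m"
    have ir: "i = q * m + r" "r < m" using dec[of i] q_def r_def by auto
    have "f i = act (mpow A q) (Vs ! r)" using F[of r q] ir by simp
    moreover have "f (Suc i) = act (mpow A q) (Vs ! Suc r)" using F[of "Suc r" q] ir by simp
    moreover have "adj (Vs ! r) (Vs ! Suc r)" using walk_adj[OF w] ir lm by simp
    ultimately have "adj (f i) (f (Suc i))" using adj_act[OF mpow_SL2[OF A]] by simp
    then show "adj (L k ! i) (L k ! Suc i)" using i Lnth Llen by simp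
  qed
  have nL: "nb (L k)" for k
    unfolding nb_def
  proof (intro allI impI)
    fix i assume i: "Suc (Suc i) < length (L k)"
    define q where "q = i div m"
    define r where "r = i mod m"
    have ir: "i = q * m + r" "r < m" using dec[of i] q_def r_def by auto
    have inj: "inj (act (mpow A q))" using inj_act[OF mpow_SL2[OF A]] .
    have "f i \<noteq> f (Suc (Suc i))"
    proof (cases "Suc (Suc r) \<le> m")
      case True
      have "f i = act (mpow A q) (Vs ! r)" using F[of r q] ir by simp
      moreover have "f (Suc (Suc i)) = act (mpow A q) (Vs ! Suc (Suc r))" using F[of "Suc (Suc r)" q] ir True by simp
      moreover have "Vs ! r \<noteq> Vs ! Suc (Suc r)" using nbV True lm unfolding nb_def by simp
      ultimately show ?thesis using inj by (auto dest: injD)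
    next
      case False
      then have r: "r = m - 1" using ir(2) by simp
      have "f i = act (mpow A q) (Vs ! (m - 1))" using F[of r q] ir r by simp
      moreover have "Suc (Suc i) = Suc q * m + 1" using ir r m1 by simp
      then have "f (Suc (Suc i)) = act (mpow A (Suc q)) (Vs ! 1)" using F[of 1 "Suc q"] m1 by simp
      then have "f (Suc (Suc i)) = act (mpow A q) (act A (Vs ! 1))" using act_mpow_Suc2 by simp
      ultimately show ?thesis using inj e' by (auto dest: injD)
    qed
    then show "L k ! i \<noteq> L k ! Suc (Suc i)" using i Lnth Llen by simp
  qed
  have DK: "dist_G W0 (act (mpow A k) W0) = k * m" for k
  proof -
    have ne: "L k \<noteq> []" using Llen[of k] by auto
    have "hd (L k) = L k ! 0" using ne by (simp add: hd_conv_nth)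
    also have "\<dots> = f (0 * m + 0)" using Lnth[of 0 k] by simp
    also have "\<dots> = W0" using F[of 0 0] v0 act_id by simp
    finally have "hd (L k) = W0" .
    moreover have "last (L k) = act (mpow A k) W0"
    proof -
      have "last (L k) = L k ! (k * m)" using Llen[of k] ne by (simp add: last_conv_nth)
      also have "\<dots> = f (k * m + 0)" using Lnth by simp
      also have "\<dots> = act (mpow A k) W0" using F[of 0 k] v0 by simp
      finally show ?thesis .
    qed
    ultimately show ?thesis using nb_dist[OF wL nL, of k] Llen by simp
  qed
  show ?thesis unfolding minimal_iff[OF A]
  proof (intro allI impI)
    fix y assume y: "admissible y"
    define d where "d = dist_G W0 y"
    define ee where "ee = dist_G y (act A y)"
    have admk: "admissible (act (mpow A k) H)" if "admissible H" for k H
      using adm_act[OF mpow_SL2[OF A] that] .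
    have gk: "dist_G y (act (mpow A k) y) \<le> k * ee" for k
    proof (induction k)
      case 0 then show ?case using act_id dist_refl[OF y] by simp
    next
      case (Suc k)
      have t: "dist_G y (act (mpow A (Suc k)) y) \<le> dist_G y (act (mpow A k) y) + dist_G (act (mpow A k) y) (act (mpow A (Suc k)) y)"
        using dist_tri[OF y admk[OF y] admk[OF y]] .
      have "dist_G (act (mpow A k) y) (act (mpow A (Suc k)) y) = ee"
        using act_mpow_Suc2[of A k y] dist_act[OF mpow_SL2[OF A], of k y "act A y"] ee_def by simp
      then show ?case using Suc t by simp
    qed
    have bk: "dist_G (act (mpow A k) y) (act (mpow A k) W0) = d" for k
      using dist_act[OF mpow_SL2[OF A]] dist_sym[OF adm_W0 y] d_def by simp
    have tri: "k * m \<le> d + k * ee + d" for k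
    proof -
      have "k * m = dist_G W0 (act (mpow A k) W0)" using DK by simp
      also have "\<dots> \<le> dist_G W0 y + dist_G y (act (mpow A k) W0)"
        using dist_tri[OF adm_W0 y admk[OF adm_W0]] .
      finally have t1: "k * m \<le> dist_G W0 y + dist_G y (act (mpow A k) W0)" .
      have t2: "dist_G y (act (mpow A k) W0) \<le> dist_G y (act (mpow A k) y) + dist_G (act (mpow A k) y) (act (mpow A k) W0)"
        using dist_tri[OF y admk[OF y] admk[OF adm_W0]] .
      show ?thesis using t1 t2 gk[of k] bk[of k] d_def by simp
    qed
    show "cplx A \<le> dist_G y (act A y)"
    proof (rule ccontr)
      assume "\<not> cplx A \<le> dist_G y (act A y)"
      then have lt: "Suc ee \<le> m" using ee_def m_def by simp
      define k where "k = Suc (2 * d)"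
      have "k * Suc ee \<le> k * m" by (rule mult_le_mono2[OF lt])
      moreover have "k * m \<le> 2 * d + k * ee" using tri[of k] by simp
      ultimately have "k \<le> 2 * d" by simp
      then show False using k_def by simp
    qed
  qed
qed

theorem theorem7:
  fixes A :: mat2
  assumes "A \<in> SL2"
  shows "(cplx A \<le> 1 \<longrightarrow> minimal A) \<and>
         (\<forall>Vs. is_walk Vs \<and> length Vs = Suc (cplx A) \<and> hd Vs = W0 \<and> last Vs = act A W0
              \<and> cplx A > 1 \<longrightarrow>
            (minimal A \<longleftrightarrow> Vs ! (cplx A - 1) \<noteq> act A (Vs ! 1)))"
  using part1[OF assms] part2_neg[OF assms] part2_pos[OF assms] by blast

end
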